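(* Let $J$ be a $\lambda$-admissible almost complex structure on $Q\times S^1$ and let $u=(w,f):\mathbb C\to Q\times S^1$ be an lcs instanton, regarding $\infty$ as a puncture of $\mathbb C=\mathbb CP^1\setminus\{\infty\}$. Suppose $\|dw\|_{C^0}<\infty$ and $$E^\pi(u)=0,\qquad E^\perp(u)<\infty .$$ Then $u$ is a constant map.
   Context: $(Q,\lambda)$ is a contact manifold with contact form $\lambda$, $\xi=\ker\lambda$, Reeb field $R_\lambda$, $\pi:TQ\to\xi$ the projection along $R_\lambda$. $S^1=\mathbb R/\mathbb Z$ with coordinate $\theta$, $\omega_\lambda=d\lambda+d\theta\wedge\lambda$, $\mathcal V=\mathrm{span}\{\partial_\theta,R_\lambda\}$. $J$ is $\lambda$-admissible if it is $\omega_\lambda$-tame, preserves $\xi$ and $\mathcal V$, and $J\partial_\theta=R_\lambda$; $J|_\xi$ is $d\lambda$-compatible, $Q$ has the metric $g=d\lambda(\cdot,J\cdot)|_\xi+\lambda\otimes\lambda$, and $\mathbb C$ its standard metric. An lcs instanton is $u=(w,f)$ with $\frac12(\pi dw+J\pi dw\circ j)=0$ and $w^*\lambda\circ j=f^*d\theta$. $E^\pi(u)=\frac12\int_{\mathbb C}|\pi dw|^2dA$. Since $\mathbb C$ is simply connected, $f^*d\theta=d\widetilde f$ for a lift $\widetilde f:\mathbb C\to\mathbb R$ of $f$. Let $\mathcal C$ be the set of smooth compactly supported functions $\varphi:\mathbb R\to\mathbb R_{\ge0}$ with $\int_{\mathbb R}\varphi=1$. The vertical energy is $E^\perp(u)=\sup_{\varphi\in\mathcal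 C}\int_{\mathbb C}\varphi(\widetilde f)\,d\widetilde f\wedge w^*\lambda$ (independent of the choice of lift). *)

theory Defs
  imports "HOL-Analysis.Analysis"
begin

fun iter_dd :: "'a::euclidean_space list \<Rightarrow> ('a \<Rightarrow> 'b::real_normed_vector) \<Rightarrow> 'a \<Rightarrow> 'b" where
  "iter_dd [] f = f"
| "iter_dd (v # vs) f = (\<lambda>x. frechet_derivative (iter_dd vs f) (at x) v)"

definition cinf_on :: "'a::euclidean_space set \<Rightarrow> ('a \<Rightarrow> 'b::real_normed_vector) \<Rightarrow> bool" where
  "cinf_on U f \<longleftrightarrow> open U \<and> (\<forall>vs. \<forall>x\<in>U. iter_dd vs f differentiable (at x))"

definition embedded_submanifold :: "'a::euclidean_space set \<Rightarrow> bool" where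
  "embedded_submanifold Q \<longleftrightarrow>
     (\<forall>q\<in>Q. \<exists>U V (\<psi>::'a \<Rightarrow> 'a) \<psi>i L. open U \<and> q \<in> U \<and> open V \<and>
        cinf_on U \<psi> \<and> cinf_on V \<psi>i \<and> \<psi> ` U = V \<and>
        (\<forall>x\<in>U. \<psi>i (\<psi> x) = x) \<and> (\<forall>y\<in>V. \<psi> (\<psi>i y) = y) \<and>
        subspace L \<and> \<psi> ` (Q \<inter> U) = V \<inter> L)"

definition tangent_space :: "'a::euclidean_space set \<Rightarrow> 'a \<Rightarrow> 'a set" where
  "tangent_space Q q = {v. \<exists>\<gamma>::real \<Rightarrow> 'a. cinf_on UNIV \<gamma> \<and> (\<forall>t. \<gamma> t \<in> Q) \<and> \<gamma> 0 = q \<and>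
      (\<gamma> has_vector_derivative v) (at 0)}"

text \<open>A 1-form on Q is the restriction of an ambient smooth 1-form x \<mapsto> (v \<mapsto> Lam x \<bullet> v).
  Its exterior derivative (restricted to tangent vectors):\<close>
definition dlam :: "('a::euclidean_space \<Rightarrow> 'a) \<Rightarrow> 'a \<Rightarrow> 'a \<Rightarrow> 'a \<Rightarrow> real" where
  "dlam Lam x v w = frechet_derivative Lam (at x) v \<bullet> w - frechet_derivative Lam (at x) w \<bullet> v"

definition xi :: "'a::euclidean_space set \<Rightarrow> ('a \<Rightarrow> 'a) \<Rightarrow> 'a \<Rightarrow> 'a set" where
  "xi Q Lam q = {v \<in> tangent_space Q q. Lam q \<bullet> v = 0}"

definition contact_manifold :: "'a::euclidean_space set \<Rightarrow> ('a \<Rightarrow> 'a) \<Rightarrow> bool" where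
  "contact_manifold Q Lam \<longleftrightarrow> embedded_submanifold Q \<and>
     (\<exists>W. open W \<and> Q \<subseteq> W \<and> cinf_on W Lam) \<and>
     (\<forall>q\<in>Q. (\<exists>v\<in>tangent_space Q q. Lam q \<bullet> v \<noteq> 0) \<and>
        (\<forall>v\<in>xi Q Lam q. v \<noteq> 0 \<longrightarrow> (\<exists>w\<in>xi Q Lam q. dlam Lam q v w \<noteq> 0)))"

definition reeb_field :: "'a::euclidean_space set \<Rightarrow> ('a \<Rightarrow> 'a) \<Rightarrow> ('a \<Rightarrow> 'a) \<Rightarrow> bool" where
  "reeb_field Q Lam R \<longleftrightarrow> (\<forall>q\<in>Q. R q \<in> tangent_space Q q \<and> Lam q \<bullet> R q = 1 \<and>
     (\<forall>v\<in>tangent_space Q q. dlam Lam q (R q) v = 0))"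

definition proj_xi :: "('a::euclidean_space \<Rightarrow> 'a) \<Rightarrow> ('a \<Rightarrow> 'a) \<Rightarrow> 'a \<Rightarrow> 'a \<Rightarrow> 'a" where
  "proj_xi Lam R q v = v - (Lam q \<bullet> v) *\<^sub>R R q"

text \<open>S^1 = R/Z is represented by the real coordinate theta; J q theta is an endomorphism of
  T_q Q \<times> R = T_(q,[theta]) (Q \<times> S^1), required to be 1-periodic in theta.
  The vector (0,1) is d/dtheta.\<close>

definition omega_lam :: "('a::euclidean_space \<Rightarrow> 'a) \<Rightarrow> 'a \<Rightarrow> 'a \<times> real \<Rightarrow> 'a \<times> real \<Rightarrow> real" where
  "omega_lam Lam q X Y = dlam Lam q (fst X) (fst Y) + snd X * (Lam q \<bullet> fst Y) - snd Y * (Lam q \<bullet> fst X)"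

definition lam_admissible ::
  "'a::euclidean_space set \<Rightarrow> ('a \<Rightarrow> 'a) \<Rightarrow> ('a \<Rightarrow> 'a) \<Rightarrow> ('a \<Rightarrow> real \<Rightarrow> 'a \<times> real \<Rightarrow> 'a \<times> real) \<Rightarrow> bool" where
  "lam_admissible Q Lam R J \<longleftrightarrow>
     \<comment> \<open>smooth almost complex structure (restriction of a smooth ambient field of endomorphisms)\<close>
     (\<exists>W. open W \<and> Q \<subseteq> W \<and> (\<forall>x\<in>W. \<forall>\<theta>. linear (J x \<theta>)) \<and>
          (\<forall>X. cinf_on (W \<times> UNIV) (\<lambda>p. J (fst p) (snd p) X))) \<and>
     (\<forall>q\<in>Q. \<forall>\<theta>.
        J q (\<theta> + 1) = J q \<theta> \<and>
        (\<forall>X \<in> tangent_space Q q \<times> UNIV. J q \<theta> X \<in> tangent_space Q q \<times> UNIV \<and> J q \<theta> (J q \<theta> X) = - X) \<and>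
        \<comment> \<open>omega_lambda-tame\<close>
        (\<forall>X \<in> tangent_space Q q \<times> UNIV. X \<noteq> 0 \<longrightarrow> omega_lam Lam q X (J q \<theta> X) > 0) \<and>
        \<comment> \<open>preserves xi\<close>
        (\<forall>v\<in>xi Q Lam q. J q \<theta> (v, 0) \<in> xi Q Lam q \<times> {0}) \<and>
        \<comment> \<open>preserves V = span {d/dtheta, R}, and J d/dtheta = R\<close>
        (\<forall>X \<in> span {(0, 1), (R q, 0)}. J q \<theta> X \<in> span {(0, 1), (R q, 0)}) \<and>
        J q \<theta> (0, 1) = (R q, 0) \<and>
        \<comment> \<open>J restricted to xi is d lambda-compatible\<close>
        (\<forall>v\<in>xi Q Lam q. \<forall>w\<in>xi Q Lam q.
            dlam Lam q (fst (J q \<theta> (v, 0))) (fst (J q \<theta> (w, 0))) = dlam Lam q v w) \<and>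
        (\<forall>v\<in>xi Q Lam q. v \<noteq> 0 \<longrightarrow> dlam Lam q v (fst (J q \<theta> (v, 0))) > 0))"

text \<open>Squared norm of v \<in> T_q Q for the metric g = d lambda(., J .)|xi + lambda \<otimes> lambda
  (J taken at the point (q, theta)).\<close>
definition gnorm2 :: "('a::euclidean_space \<Rightarrow> 'a) \<Rightarrow> ('a \<Rightarrow> 'a) \<Rightarrow> ('a \<Rightarrow> real \<Rightarrow> 'a \<times> real \<Rightarrow> 'a \<times> real)
    \<Rightarrow> 'a \<Rightarrow> real \<Rightarrow> 'a \<Rightarrow> real" where
  "gnorm2 Lam R J q \<theta> v =
     dlam Lam q (proj_xi Lam R q v) (fst (J q \<theta> (proj_xi Lam R q v, 0))) + (Lam q \<bullet> v)\<^sup>2"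

text \<open>ft is a (smooth) real lift of f, so f^* dtheta = d ft; j is multiplication by i.\<close>
definition lcs_instanton :: "'a::euclidean_space set \<Rightarrow> ('a \<Rightarrow> 'a) \<Rightarrow> ('a \<Rightarrow> 'a)
    \<Rightarrow> ('a \<Rightarrow> real \<Rightarrow> 'a \<times> real \<Rightarrow> 'a \<times> real) \<Rightarrow> (complex \<Rightarrow> 'a) \<Rightarrow> (complex \<Rightarrow> real) \<Rightarrow> bool" where
  "lcs_instanton Q Lam R J w ft \<longleftrightarrow>
     cinf_on UNIV w \<and> (\<forall>z. w z \<in> Q) \<and> cinf_on UNIV ft \<and>
     (\<forall>z v. proj_xi Lam R (w z) (frechet_derivative w (at z) v)
            + fst (J (w z) (ft z) (proj_xi Lam R (w z) (frechet_derivative w (at z) (\<i> * v)), 0)) = 0) \<and>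
     (\<forall>z v. Lam (w z) \<bullet> frechet_derivative w (at z) (\<i> * v) = frechet_derivative ft (at z) v)"

text \<open>Pointwise squared norm of dw (Hilbert-Schmidt, w.r.t. the standard metric on C and g on Q).\<close>
definition dw_norm2 where
  "dw_norm2 Lam R J w ft z =
     gnorm2 Lam R J (w z) (ft z) (frechet_derivative w (at z) 1)
   + gnorm2 Lam R J (w z) (ft z) (frechet_derivative w (at z) \<i>)"

definition pi_dw_norm2 where
  "pi_dw_norm2 Lam R J w ft z =
     gnorm2 Lam R J (w z) (ft z) (proj_xi Lam R (w z) (frechet_derivative w (at z) 1))
   + gnorm2 Lam R J (w z) (ft z) (proj_xi Lam R (w z) (frechet_derivative w (at z) \<i>))"

definition E_pi :: "_ \<Rightarrow> _ \<Rightarrow> _ \<Rightarrow> (complex \<Rightarrow> 'a::euclidean_space) \<Rightarrow> (complex \<Rightarrow> real) \<Rightarrow> ennreal" where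
  "E_pi Lam R J w ft = (\<integral>\<^sup>+ z. ennreal (pi_dw_norm2 Lam R J w ft z / 2) \<partial>lborel)"

definition test_fns :: "(real \<Rightarrow> real) set" where
  "test_fns = {\<phi>. cinf_on UNIV \<phi> \<and> (\<forall>t. \<phi> t \<ge> 0) \<and> compact (closure {t. \<phi> t \<noteq> 0}) \<and>
                 (\<phi> has_integral 1) UNIV}"

text \<open>(d ft \<and> w^* lambda)(d/dx, d/dy), the density of the 2-form w.r.t. dx dy.\<close>
definition vert_density where
  "vert_density Lam w ft z =
     frechet_derivative ft (at z) 1 * (Lam (w z) \<bullet> frechet_derivative w (at z) \<i>)
   - frechet_derivative ft (at z) \<i> * (Lam (w z) \<bullet> frechet_derivative w (at z) 1)"

definition E_perp :: "('a::euclidean_space \<Rightarrow> 'a) \<Rightarrow> (complex \<Rightarrow> 'a) \<Rightarrow> (complex \<Rightarrow> real) \<Rightarrow> ennreal" where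
  "E_perp Lam w ft = (SUP \<phi>\<in>test_fns. \<integral>\<^sup>+ z. ennreal (\<phi> (ft z) * vert_density Lam w ft z) \<partial>lborel)"

end

theory Submission
  imports Defs "HOL-Computational_Algebra.Polynomial" "HOL-Complex_Analysis.Complex_Analysis"
begin



definition sm1 :: "(real \<Rightarrow> real) \<Rightarrow> bool" where
  "sm1 f \<longleftrightarrow> (\<exists>D. D 0 = f \<and> (\<forall>n x. (D n has_real_derivative D (Suc n) x) (at x)))"

lemma sm1_cinf:
  assumes "sm1 f" shows "cinf_on UNIV f"
proof -
  obtain D where D0: "D 0 = f" and DD: "\<And>n x. (D n has_real_derivative D (Suc n) x) (at x)"
    using assms unfolding sm1_def by blast
  have it: "iter_dd vs f = (\<lambda>x. prod_list vs * D (length vs) x)" for vs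
  proof (induction vs)
    case Nil then show ?case using D0 by simp
  next
    case (Cons v vs)
    have "frechet_derivative (\<lambda>x. prod_list vs * D (length vs) x) (at x) = (\<lambda>h. (prod_list vs * D (Suc (length vs)) x) * h)" for x
    proof -
      have "((\<lambda>x. prod_list vs * D (length vs) x) has_real_derivative (prod_list vs * D (Suc (length vs)) x)) (at x)"
        using DD by (intro DERIV_cmult) auto
      then show ?thesis unfolding has_field_derivative_def by (metis frechet_derivative_at)
    qed
    then show ?case by (simp only: iter_dd.simps Cons.IH) (simp add: fun_eq_iff mult_ac)
  qed
  show ?thesis unfolding cinf_on_def
  proof (intro conjI allI ballI)
    fix vs and x :: real
    have "((\<lambda>x. prod_list vs * D (length vs) x) has_real_derivative (prod_list vs * D (Suc (length vs)) x)) (at x)"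
      using DD by (intro DERIV_cmult) auto
    then show "iter_dd vs f differentiable at x" unfolding it
      using real_differentiable_def differentiableI by blast
  qed simp
qed

lemma sm1_cmult: "sm1 f \<Longrightarrow> sm1 (\<lambda>t. c * f t)"
  unfolding sm1_def
proof (elim exE conjE)
  fix D assume "D 0 = f" "\<forall>n x. (D n has_real_derivative D (Suc n) x) (at x)"
  then show "\<exists>D. D 0 = (\<lambda>t. c * f t) \<and> (\<forall>n x. (D n has_real_derivative D (Suc n) x) (at x))"
    by (intro exI[of _ "\<lambda>n t. c * D n t"]) (auto intro: DERIV_cmult)
qed

definition Bf :: "real poly \<Rightarrow> nat \<Rightarrow> real \<Rightarrow> real" where
  "Bf P k t = (if 0 < 1 - t^2 then poly P t * exp (-1/(1-t^2)) / (1-t^2)^k else 0)"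

definition Qn :: "real poly \<Rightarrow> nat \<Rightarrow> real poly" where
  "Qn P k = pderiv P * [:1,0,-1:]^2 + smult (2 * real k) ([:0,1:] * P * [:1,0,-1:]) - smult 2 ([:0,1:] * P)"

definition Gm :: "nat \<Rightarrow> real \<Rightarrow> real" where
  "Gm m s = (if 0 < s then exp (-1/s) / s^m else 0)"

lemma Gm_lim: "(Gm m \<longlongrightarrow> 0) (at 0)"
proof (subst filterlim_at_split, rule conjI)
  show "(Gm m \<longlongrightarrow> 0) (at_left 0)"
    by (rule tendsto_eventually) (auto simp: Gm_def intro!: eventually_at_leftI[of "-1"])
next
  have "((\<lambda>s. (inverse s) ^ m / exp (inverse s)) \<longlongrightarrow> 0) (at_right (0::real))"
    by (rule filterlim_compose[OF tendsto_power_div_exp_0 filterlim_inverse_at_top_right])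
  moreover have "eventually (\<lambda>s. (inverse s) ^ m / exp (inverse s) = Gm m s) (at_right (0::real))"
    by (rule eventually_at_rightI[of 0 1]) (auto simp: Gm_def exp_minus power_inverse field_simps)
  ultimately show "(Gm m \<longlongrightarrow> 0) (at_right 0)"
    using tendsto_cong by fastforce
qed

lemma alg: fixes s::real assumes "s \<noteq> 0"
  shows "((a * E + E * (- (2 * t) / s ^ 2) * b) * s ^ k - b * E * (real k * s ^ (k - 1) * (- (2 * t)))) / (s ^ k * s ^ k) = (a * s ^ 2 + 2 * real k * t * b * s - 2 * t * b) * E / s ^ (k + 2)"
proof (cases k)
  case 0
  then show ?thesis using assms by (simp add: field_simps power2_eq_square)
next
  case (Suc j)
  have "s^k = s * s^j" "s^(k-1) = s^j" "s^(k+2) = s^j * (s * s * s)" using Suc by (simp_all add: power_add)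
  then show ?thesis using assms by (simp add: field_simps power2_eq_square)
qed

lemma poly_Qn: "poly (Qn P k) t = poly (pderiv P) t * (1 - t ^ 2) ^ 2 + 2 * real k * t * poly P t * (1 - t ^ 2) - 2 * t * poly P t"
  by (simp add: Qn_def poly_pCons algebra_simps power2_eq_square)

lemma Bf_deriv_int:
  assumes s: "0 < 1 - t^2"
  shows "((\<lambda>t. poly P t * exp (-1/(1-t^2)) / (1-t^2)^k) has_real_derivative
           poly (Qn P k) t * exp (-1/(1-t^2)) / (1-t^2)^(k+2)) (at t)"
proof -
  have ne: "1 - t^2 \<noteq> 0" using s by simp
  have e: "((\<lambda>t. exp (-1/(1-t^2))) has_real_derivative exp (-1/(1-t^2)) * (- (2*t) / (1-t^2)^2)) (at t)"
  proof -
    have i: "((\<lambda>t. -1/(1-t^2)) has_real_derivative (- (2*t) / (1-t^2)^2)) (at t)"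
    proof -
      have "((\<lambda>t. -1/(1-t^2)) has_real_derivative ((0 * (1-t^2) - (-1) * (0 - real 2 * t^(2-1))) / ((1-t^2)*(1-t^2)))) (at t)"
      proof -
        have sq: "((\<lambda>t. t^2) has_real_derivative real 2 * t^(2-1)) (at t)"
          by (rule derivative_eq_intros refl | simp)+
        show ?thesis by (intro DERIV_divide DERIV_const DERIV_diff sq) (use ne in simp)
      qed
      then show ?thesis by (rule DERIV_cong) (simp add: power2_eq_square)
    qed
    show ?thesis using DERIV_chain2[OF DERIV_exp i] .
  qed
  have p: "((\<lambda>t. (1-t^2)^k) has_real_derivative real k * (1-t^2)^(k-1) * (- (2*t))) (at t)"
  proof -
    have s1: "((\<lambda>t. 1 - t^2) has_real_derivative -(2*t)) (at t)"
      by (rule derivative_eq_intros refl | simp)+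
    show ?thesis using DERIV_chain2[OF DERIV_pow s1, of k] by simp
  qed
  have nk: "(1-t^2)^k \<noteq> 0" using ne by simp
  note d = DERIV_divide[OF DERIV_mult[OF poly_DERIV e] p nk]
  show ?thesis
    using d
    proof (rule DERIV_cong)
    qed (unfold poly_Qn, rule alg[OF ne])
qed

lemma Bf_deriv: "(Bf P k has_real_derivative Bf (Qn P k) (k+2) t) (at t)"
proof (cases "0 < 1 - t^2")
  case True
  have o: "open {t::real. 0 < 1 - t^2}"
    by (intro open_Collect_less continuous_intros)
  have eq: "Bf (Qn P k) (k+2) t = poly (Qn P k) t * exp (-1/(1-t^2)) / (1-t^2)^(k+2)"
    using True by (simp add: Bf_def)
  show ?thesis unfolding eq
    by (rule has_field_derivative_transform_within_open[OF Bf_deriv_int[OF True] o])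
       (use True in \<open>auto simp: Bf_def\<close>)
next
  case False
  note F = False
  show ?thesis
  proof (cases "1 - t^2 < 0")
    case True
    have o: "open {t::real. 1 - t^2 < 0}"
      by (intro open_Collect_less continuous_intros)
    have eq: "Bf (Qn P k) (k+2) t = 0"
      using True by (simp add: Bf_def)
    show ?thesis unfolding eq
      by (rule has_field_derivative_transform_within_open[OF DERIV_const o])
         (use True in \<open>auto simp: Bf_def\<close>)
  next
    case False
    then have t2: "1 - t^2 = 0" using F by simp
    have z: "Bf P k t = 0" "Bf (Qn P k) (k+2) t = 0" using t2 by (auto simp: Bf_def)
    have lim: "((\<lambda>h. poly P (t+h) * Gm (k+1) (1 - (t+h)^2) * (- (2*t+h))) \<longlongrightarrow> poly P (t+0) * 0 * (- (2*t+0))) (at 0)"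
    proof -
      have l1: "((\<lambda>h. poly P (t+h)) \<longlongrightarrow> poly P (t+0)) (at 0)"
        by (intro isCont_tendsto_compose[where g="poly P"] tendsto_intros) auto
      have ic: "isCont (Gm (Suc k)) 0" using Gm_lim[of "Suc k"] by (simp add: isCont_def Gm_def)
      have "((\<lambda>h. Gm (k+1) (1 - (t+h)^2)) \<longlongrightarrow> Gm (k+1) (1 - (t+0)^2)) (at 0)"
        using t2 by (intro isCont_tendsto_compose[where g="Gm (k+1)"] tendsto_intros) (auto simp: ic)
      then have l2: "((\<lambda>h. Gm (k+1) (1 - (t+h)^2)) \<longlongrightarrow> 0) (at 0)"
        using t2 by (simp add: Gm_def)
      have l3: "((\<lambda>h. - (2*t+h)) \<longlongrightarrow> - (2*t+0)) (at (0::real))"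
        by (intro tendsto_intros)
      show ?thesis by (intro tendsto_mult l1 l2 l3)
    qed
    have ev: "eventually (\<lambda>h. poly P (t+h) * Gm (k+1) (1 - (t+h)^2) * (- (2*t+h)) = (Bf P k (t+h) - Bf P k t) / h) (at 0)"
      unfolding eventually_at_filter
    proof (intro always_eventually allI impI)
      fix h :: real assume "h \<noteq> 0"
      have sh: "1 - (t+h)^2 = - (2*t+h) * h" using t2 by (simp add: algebra_simps power2_eq_square)
      show "poly P (t+h) * Gm (k+1) (1 - (t+h)^2) * (- (2*t+h)) = (Bf P k (t+h) - Bf P k t) / h"
      proof (cases "0 < 1 - (t+h)^2")
        case True
        define S where "S = 1 - (t+h)^2"
        have S0: "S \<noteq> 0" and Sh: "S = - (2*t+h) * h" using True sh by (auto simp: S_def)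
        have c0: "- (2*t+h) \<noteq> 0" using S0 Sh by auto
        have "poly P (t+h) * (exp (-1/S) / S^(k+1)) * (- (2*t+h)) = (poly P (t+h) * exp (-1/S) / S^k - 0) / h"
        proof -
          have "S^(k+1) = S^k * (- (2*t+h) * h)" using Sh by simp
          then show ?thesis using S0 c0 \<open>h \<noteq> 0\<close> by (simp add: field_simps) (simp add: Sh algebra_simps)
        qed
        then show ?thesis using True unfolding z(1) by (simp add: Gm_def Bf_def S_def)
      next
        case False
        then show ?thesis unfolding z(1) by (simp add: Gm_def Bf_def)
      qed
    qed
    show ?thesis unfolding DERIV_def z(2) using tendsto_cong[OF ev] lim by simp
  qed
qed

primrec seqPk :: "real poly \<Rightarrow> nat \<Rightarrow> nat \<Rightarrow> real poly \<times> nat" where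
  "seqPk P k 0 = (P, k)"
| "seqPk P k (Suc n) = (Qn (fst (seqPk P k n)) (snd (seqPk P k n)), snd (seqPk P k n) + 2)"

lemma sm1_Bf: "sm1 (Bf P k)"
  unfolding sm1_def
  by (rule exI[of _ "\<lambda>n. Bf (fst (seqPk P k n)) (snd (seqPk P k n))"]) (simp; metis Bf_deriv add_2_eq_Suc')

definition bump :: "real \<Rightarrow> real" where "bump = Bf [:1:] 0"

lemma bump_eq: "bump t = (if 0 < 1 - t^2 then exp (-1/(1-t^2)) else 0)"
  by (simp add: bump_def Bf_def)

lemma bump_nonneg: "0 \<le> bump t" by (simp add: bump_eq)

lemma bump_cont: "continuous_on S bump"
  unfolding bump_def
  by (meson Bf_deriv DERIV_isCont continuous_at_imp_continuous_on)

lemma bump_zero: "t \<notin> {-1..1} \<Longrightarrow> bump t = 0"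
proof -
  assume "t \<notin> {-1..1}"
  then have "1 \<le> \<bar>t\<bar>" by auto
  then have "1 \<le> t^2" using one_le_power[of "\<bar>t\<bar>" 2] by simp
  then show ?thesis by (simp add: bump_eq)
qed

lemma bump_integral: "\<exists>c>0. (bump has_integral c) UNIV"
proof -
  have int: "bump integrable_on {-1..1}"
    by (rule integrable_continuous_interval[OF bump_cont])
  define c where "c = integral {-1..1} bump"
  have hi: "(bump has_integral c) {-1..1}" using int by (simp add: c_def integrable_integral)
  have "(bump has_integral c) UNIV"
    by (rule has_integral_on_superset[OF hi]) (auto simp: bump_zero)
  moreover have "c > 0"
  proof -
    let ?g = "\<lambda>t::real. if t \<in> {-1/2..1/2} then exp (-2::real) else 0"
    have gi: "(?g has_integral exp (-2)) {-1..1}"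
    proof -
      have "((\<lambda>t::real. exp (-2)) has_integral exp (-2)) {-1/2..1/2}"
        using has_integral_const_real[of "exp (-2)" "-1/2" "1/2"] by simp
      then show ?thesis by (subst has_integral_restrict) auto
    qed
    have le: "?g t \<le> bump t" if "t \<in> {-1..1}" for t
    proof (cases "t \<in> {-1/2..1/2}")
      case True
      then have "\<bar>t\<bar> \<le> 1/2" by auto
      then have "\<bar>t\<bar>^2 \<le> (1/2)^2" by (rule power_mono) simp
      then have t2: "t^2 \<le> 1/4" by (simp add: power2_eq_square)
      then have p: "0 < 1 - t^2" by simp
      have "-2 \<le> -1/(1-t^2)" using t2 p by (simp add: field_simps)
      then show ?thesis using True p by (simp add: bump_eq)
    next
      case False then have "?g t = 0" by simp
      then show ?thesis using bump_nonneg[of t] by linarith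
    qed
    have "integral {-1..1} ?g \<le> integral {-1..1} bump"
      by (rule integral_le[OF has_integral_integrable[OF gi] int le])
    moreover have "integral {-1..1} ?g = exp (-2)" by (rule integral_unique[OF gi])
    ultimately have "exp (-2) \<le> c" unfolding c_def by linarith
    then show ?thesis using exp_gt_zero[of "-2"] by linarith
  qed
  ultimately show ?thesis by blast
qed

lemma test_fn_exists: "\<exists>\<phi>. \<phi> \<in> test_fns"
proof -
  obtain c where c: "c > 0" "(bump has_integral c) UNIV" using bump_integral by blast
  define \<phi> where "\<phi> = (\<lambda>t. (1/c) * bump t)"
  have "\<phi> \<in> test_fns"
    unfolding test_fns_def
  proof (intro CollectI conjI allI)
    show "cinf_on UNIV \<phi>" unfolding \<phi>_def bump_def by (intro sm1_cinf sm1_cmult sm1_Bf)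
    show "0 \<le> \<phi> t" for t using c by (simp add: \<phi>_def bump_nonneg)
    have "{t. \<phi> t \<noteq> 0} \<subseteq> {-1..1}"
    proof
      fix x assume "x \<in> {t. \<phi> t \<noteq> 0}"
      then have "bump x \<noteq> 0" by (simp add: \<phi>_def)
      then show "x \<in> {-1..1}" using bump_zero by blast
    qed
    then have "closure {t. \<phi> t \<noteq> 0} \<subseteq> {-1..1}" by (simp add: closure_minimal)
    then show "compact (closure {t. \<phi> t \<noteq> 0})"
      by (meson compact_Icc compact_closure bounded_subset compact_imp_bounded closure_subset order_trans)
    show "(\<phi> has_integral 1) UNIV"
      using has_integral_mult_right[OF c(2), of "1/c"] c by (simp add: \<phi>_def)
  qed
  then show ?thesis by blast
qed



lemma fd_eq: "(f has_derivative f') (at x) \<Longrightarrow> frechet_derivative f (at x) = f'"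
  by (metis frechet_derivative_at)

lemma iter_dd_affine:
  fixes G :: "'b::euclidean_space \<Rightarrow> 'c::real_normed_vector"
  assumes d: "\<forall>vs x. iter_dd vs G differentiable (at x)"
  shows "iter_dd vs (\<lambda>t::real. G (z + t *\<^sub>R v)) = (\<lambda>t. iter_dd (map (\<lambda>s. s *\<^sub>R v) vs) G (z + t *\<^sub>R v))"
proof (induction vs)
  case Nil then show ?case by simp
next
  case (Cons s vs)
  let ?H = "iter_dd (map (\<lambda>s. s *\<^sub>R v) vs) G"
  have "frechet_derivative (\<lambda>t. ?H (z + t *\<^sub>R v)) (at x) = (\<lambda>h. frechet_derivative ?H (at (z + x *\<^sub>R v)) (h *\<^sub>R v))" for x
  proof -
    have a: "((\<lambda>t. z + t *\<^sub>R v) has_derivative (\<lambda>h. h *\<^sub>R v)) (at x)"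
      by (intro derivative_eq_intros) auto
    have b: "(?H has_derivative frechet_derivative ?H (at (z + x *\<^sub>R v))) (at (z + x *\<^sub>R v))"
      using d frechet_derivative_works by blast
    show ?thesis by (rule fd_eq[OF has_derivative_compose[OF a b]])
  qed
  then show ?case by (simp only: iter_dd.simps Cons.IH) simp
qed

lemma cinf_curve:
  fixes G :: "'b::euclidean_space \<Rightarrow> 'c::real_normed_vector"
  assumes d: "\<forall>vs x. iter_dd vs G differentiable (at x)"
  shows "cinf_on UNIV (\<lambda>t::real. G (z + t *\<^sub>R v))"
  unfolding cinf_on_def
proof (intro conjI allI ballI)
  fix vs and x :: real
  have a: "(\<lambda>t::real. z + t *\<^sub>R v) differentiable (at x)"
    by (intro derivative_intros)
  have "(\<lambda>t. iter_dd (map (\<lambda>s. s *\<^sub>R v) vs) G (z + t *\<^sub>R v)) differentiable (at x)"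
    using differentiable_chain_at[OF a, of "iter_dd (map (\<lambda>s. s *\<^sub>R v) vs) G"] d by (simp add: o_def)
  then show "iter_dd vs (\<lambda>t. G (z + t *\<^sub>R v)) differentiable at x"
    by (simp add: iter_dd_affine[OF d])
qed simp

lemma tangent_dw:
  fixes w :: "'b::euclidean_space \<Rightarrow> 'a::euclidean_space"
  assumes d: "\<forall>vs x. iter_dd vs w differentiable (at x)" and Q: "\<forall>z. w z \<in> Q"
  shows "frechet_derivative w (at z) v \<in> tangent_space Q (w z)"
  unfolding tangent_space_def
proof (intro CollectI exI conjI allI)
  show "cinf_on UNIV (\<lambda>t::real. w (z + t *\<^sub>R v))" by (rule cinf_curve[OF d])
  show "w (z + t *\<^sub>R v) \<in> Q" for t using Q by blast
  show "w (z + 0 *\<^sub>R v) = w z" by simp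
  have a: "((\<lambda>t. z + t *\<^sub>R v) has_derivative (\<lambda>h. h *\<^sub>R v)) (at 0)"
    by (intro derivative_eq_intros) auto
  have "w differentiable (at z)" using d[rule_format, of "[]"] by simp
  then have "(w has_derivative frechet_derivative w (at z)) (at z)"
    by (rule frechet_derivative_works[THEN iffD1])
  then have b: "(w has_derivative frechet_derivative w (at z)) (at (z + 0 *\<^sub>R v))"
    by simp
  have lin: "linear (frechet_derivative w (at z))"
    using b has_derivative_linear by blast
  show "((\<lambda>t. w (z + t *\<^sub>R v)) has_vector_derivative frechet_derivative w (at z) v) (at 0)"
    unfolding has_vector_derivative_def
    using has_derivative_compose[OF a b] by (simp add: linear_cmul[OF lin])
qed

lemma line_deriv:
  fixes H :: "'b::euclidean_space \<Rightarrow> real"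
  assumes "\<And>x. H differentiable (at x)"
  shows "((\<lambda>s. H (a + s *\<^sub>R v)) has_real_derivative frechet_derivative H (at (a + s *\<^sub>R v)) v) (at s)"
proof -
  have a: "((\<lambda>t. a + t *\<^sub>R v) has_derivative (\<lambda>h. h *\<^sub>R v)) (at s)"
    by (intro derivative_eq_intros) auto
  have b: "(H has_derivative frechet_derivative H (at (a + s *\<^sub>R v))) (at (a + s *\<^sub>R v))"
    using assms frechet_derivative_works by blast
  have lin: "linear (frechet_derivative H (at (a + s *\<^sub>R v)))"
    using b has_derivative_linear by blast
  show ?thesis
    by (rule has_derivative_imp_has_field_derivative[OF has_derivative_compose[OF a b]])
       (simp add: linear_cmul[OF lin])
qed

lemma mixed_mvt:
  fixes g :: "'b::euclidean_space \<Rightarrow> real"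
  assumes d: "\<forall>vs x. iter_dd vs g differentiable (at x)" and h: "h > 0"
    and n1: "norm v1 = 1" and n2: "norm v2 = 1"
  shows "\<exists>p. dist p z < 2*h \<and>
    g (z + h *\<^sub>R v1 + h *\<^sub>R v2) - g (z + h *\<^sub>R v1) - g (z + h *\<^sub>R v2) + g z = h * h * iter_dd [v2, v1] g p"
proof -
  have dg: "\<And>x. g differentiable (at x)" using d[rule_format, of "[]"] by simp
  have dg1: "\<And>x. iter_dd [v1] g differentiable (at x)" using d by blast
  let ?phi = "\<lambda>s. g (z + h *\<^sub>R v2 + s *\<^sub>R v1) - g (z + s *\<^sub>R v1)"
  let ?phi' = "\<lambda>s. iter_dd [v1] g (z + h *\<^sub>R v2 + s *\<^sub>R v1) - iter_dd [v1] g (z + s *\<^sub>R v1)"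
  have "\<And>s. (?phi has_real_derivative ?phi' s) (at s)"
    by (simp only: iter_dd.simps) (intro DERIV_diff line_deriv dg)
  then obtain \<xi> where xi: "0 < \<xi>" "\<xi> < h" "?phi h - ?phi 0 = (h - 0) * ?phi' \<xi>"
    using MVT2[OF h, of ?phi ?phi'] by blast
  let ?psi = "\<lambda>t. iter_dd [v1] g (z + \<xi> *\<^sub>R v1 + t *\<^sub>R v2)"
  let ?psi' = "\<lambda>t. iter_dd [v2, v1] g (z + \<xi> *\<^sub>R v1 + t *\<^sub>R v2)"
  have "\<And>t. (?psi has_real_derivative ?psi' t) (at t)"
    by (simp only: iter_dd.simps(2)[of v2]) (intro line_deriv dg1)
  then obtain \<eta> where eta: "0 < \<eta>" "\<eta> < h" "?psi h - ?psi 0 = (h - 0) * ?psi' \<eta>"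
    using MVT2[OF h, of ?psi ?psi'] by blast
  define p where "p = z + \<xi> *\<^sub>R v1 + \<eta> *\<^sub>R v2"
  have "dist p z = norm (\<xi> *\<^sub>R v1 + \<eta> *\<^sub>R v2)" by (simp add: p_def dist_norm)
  also have "\<dots> \<le> norm (\<xi> *\<^sub>R v1) + norm (\<eta> *\<^sub>R v2)" by (rule norm_triangle_ineq)
  also have "\<dots> = \<xi> + \<eta>" using n1 n2 xi eta by simp
  finally have dp: "dist p z < 2*h" using xi eta by linarith
  have e1: "?psi h = iter_dd [v1] g (z + h *\<^sub>R v2 + \<xi> *\<^sub>R v1)" by (simp add: add_ac)
  have e2: "?phi h - ?phi 0 = g (z + h *\<^sub>R v1 + h *\<^sub>R v2) - g (z + h *\<^sub>R v1) - g (z + h *\<^sub>R v2) + g z"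
    by (simp add: add_ac)
  have "g (z + h *\<^sub>R v1 + h *\<^sub>R v2) - g (z + h *\<^sub>R v1) - g (z + h *\<^sub>R v2) + g z = h * h * iter_dd [v2, v1] g p"
    using xi(3) eta(3) e1 e2 unfolding p_def by simp
  then show ?thesis using dp by blast
qed

lemma schwarz:
  fixes g :: "'b::euclidean_space \<Rightarrow> real"
  assumes d: "\<forall>vs x. iter_dd vs g differentiable (at x)" and n1: "norm v1 = 1" and n2: "norm v2 = 1"
  shows "iter_dd [v2, v1] g z = iter_dd [v1, v2] g z"
proof (rule ccontr)
  assume ne: "iter_dd [v2, v1] g z \<noteq> iter_dd [v1, v2] g z"
  define e where "e = \<bar>iter_dd [v2, v1] g z - iter_dd [v1, v2] g z\<bar> / 2"
  have e: "e > 0" using ne by (simp add: e_def)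
  have c1: "isCont (iter_dd [v2, v1] g) z" using d differentiable_imp_continuous_within by blast
  have c2: "isCont (iter_dd [v1, v2] g) z" using d differentiable_imp_continuous_within by blast
  obtain d1 where d1: "d1 > 0" "\<And>x. dist x z < d1 \<Longrightarrow> dist (iter_dd [v2, v1] g x) (iter_dd [v2, v1] g z) < e"
    using c1 e unfolding continuous_at_eps_delta by blast
  obtain d2 where d2: "d2 > 0" "\<And>x. dist x z < d2 \<Longrightarrow> dist (iter_dd [v1, v2] g x) (iter_dd [v1, v2] g z) < e"
    using c2 e unfolding continuous_at_eps_delta by blast
  define h where "h = min d1 d2 / 2"
  have h: "h > 0" "2*h \<le> d1" "2*h \<le> d2" using d1 d2 by (auto simp: h_def)
  obtain p1 where p1: "dist p1 z < 2*h"
    "g (z + h *\<^sub>R v1 + h *\<^sub>R v2) - g (z + h *\<^sub>R v1) - g (z + h *\<^sub>R v2) + g z = h * h * iter_dd [v2, v1] g p1"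
    using mixed_mvt[OF d h(1) n1 n2] by blast
  obtain p2 where p2: "dist p2 z < 2*h"
    "g (z + h *\<^sub>R v2 + h *\<^sub>R v1) - g (z + h *\<^sub>R v2) - g (z + h *\<^sub>R v1) + g z = h * h * iter_dd [v1, v2] g p2"
    using mixed_mvt[OF d h(1) n2 n1] by blast
  have eqz: "z + h *\<^sub>R v2 + h *\<^sub>R v1 = z + h *\<^sub>R v1 + h *\<^sub>R v2" by (simp add: add_ac)
  have "h * h * iter_dd [v2, v1] g p1 = h * h * iter_dd [v1, v2] g p2"
    using p1(2) p2(2) unfolding eqz by linarith
  then have eq: "iter_dd [v2, v1] g p1 = iter_dd [v1, v2] g p2" using h by simp
  have "\<bar>iter_dd [v2, v1] g p1 - iter_dd [v2, v1] g z\<bar> < e" using d1(2)[of p1] p1 h by (simp add: dist_real_def)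
  moreover have "\<bar>iter_dd [v1, v2] g p2 - iter_dd [v1, v2] g z\<bar> < e" using d2(2)[of p2] p2 h by (simp add: dist_real_def)
  moreover have "\<And>a b X Y e::real. \<bar>a - X\<bar> < e \<Longrightarrow> \<bar>b - Y\<bar> < e \<Longrightarrow> a = b \<Longrightarrow> e = \<bar>X - Y\<bar> / 2 \<Longrightarrow> False"
    by (simp add: abs_if split: if_split_asm)
  ultimately show False using eq e_def by blast
qed



lemma Complex_cont: "continuous_on UNIV (\<lambda>p::real\<times>real. Complex (fst p) (snd p))"
proof -
  have "(\<lambda>p::real\<times>real. Complex (fst p) (snd p)) = (\<lambda>p. complex_of_real (fst p) + \<i> * complex_of_real (snd p))"
    by (auto simp: fun_eq_iff complex_eq_iff)
  then show ?thesis by (simp only:) (intro continuous_intros)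
qed

lemma Complex_meas: "(\<lambda>p::real\<times>real. Complex (fst p) (snd p)) \<in> borel_measurable lborel"
  using borel_measurable_continuous_onI[OF Complex_cont] by (simp add: measurable_lborel1)

lemma lborel_complex: "distr (lborel :: (real \<times> real) measure) borel (\<lambda>p. Complex (fst p) (snd p)) = (lborel :: complex measure)"
proof (rule lborel_eqI[symmetric])
  fix l u :: complex
  assume le: "\<And>b. b \<in> Basis \<Longrightarrow> l \<bullet> b \<le> u \<bullet> b"
  then have le1: "Re l \<le> Re u" and le2: "Im l \<le> Im u"
    using le[of 1] le[of \<i>] by (auto simp: Basis_complex_def)
  have pre: "(\<lambda>p::real\<times>real. Complex (fst p) (snd p)) -` box l u = {Re l<..<Re u} \<times> {Im l<..<Im u}"
    by (auto simp: box_def Basis_complex_def)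
  have "emeasure (distr (lborel :: (real \<times> real) measure) borel (\<lambda>p. Complex (fst p) (snd p))) (box l u)
      = emeasure (lborel \<Otimes>\<^sub>M lborel) ({Re l<..<Re u} \<times> {Im l<..<Im u})"
    by (subst emeasure_distr[OF Complex_meas]) (simp_all add: pre lborel_prod)
  also have "\<dots> = ennreal (Re u - Re l) * ennreal (Im u - Im l)"
    by (simp add: lborel.emeasure_pair_measure_Times le1 le2)
  also have "\<dots> = ennreal (\<Prod>b\<in>Basis. (u - l) \<bullet> b)"
    using le1 le2 by (simp add: Basis_complex_def ennreal_mult)
  finally show "emeasure (distr (lborel :: (real \<times> real) measure) borel (\<lambda>p. Complex (fst p) (snd p))) (box l u) = (\<Prod>b\<in>Basis. (u - l) \<bullet> b)" .
qed simp

lemma ennreal_solve: "ennreal a * x = ennreal k \<Longrightarrow> a > 0 \<Longrightarrow> k \<ge> 0 \<Longrightarrow> x = ennreal (k / a)"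
proof -
  assume h: "ennreal a * x = ennreal k" "a > 0" "k \<ge> 0"
  have "x \<noteq> \<infinity>" using h by (auto simp: ennreal_mult_top)
  then obtain r where r: "x = ennreal r" "r \<ge> 0" by (cases x) auto
  then have "ennreal (a * r) = ennreal k" using h by (simp add: ennreal_mult)
  then have "a * r = k" using h r by (simp add: ennreal_inj)
  then show ?thesis using r h by (simp add: field_simps)
qed

lemma inner_affine:
  fixes \<phi> :: "real \<Rightarrow> real"
  assumes m[measurable]: "\<phi> \<in> borel_measurable borel" and nn: "\<And>t. 0 \<le> \<phi> t"
    and one: "(\<integral>\<^sup>+t. ennreal (\<phi> t) \<partial>lborel) = 1" and K: "K > 0" and c: "c \<noteq> 0"
  shows "(\<integral>\<^sup>+y. ennreal (\<phi> (t0 + c * y) * K) \<partial>lborel) = ennreal (K / \<bar>c\<bar>)"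
proof -
  have "(\<integral>\<^sup>+u. ennreal (\<phi> u * K) \<partial>lborel) = ennreal \<bar>c\<bar> * (\<integral>\<^sup>+y. ennreal (\<phi> (t0 + c * y) * K) \<partial>lborel)"
    by (rule nn_integral_real_affine[OF _ c]) measurable
  moreover have "(\<integral>\<^sup>+u. ennreal (\<phi> u * K) \<partial>lborel) = ennreal K"
  proof -
    have "(\<integral>\<^sup>+u. ennreal (\<phi> u * K) \<partial>lborel) = (\<integral>\<^sup>+u. ennreal (\<phi> u) * ennreal K \<partial>lborel)"
      using K nn by (simp add: ennreal_mult)
    also have "\<dots> = (\<integral>\<^sup>+u. ennreal (\<phi> u) \<partial>lborel) * ennreal K"
      by (rule nn_integral_multc) measurable
    finally show ?thesis using one by simp
  qed
  ultimately show ?thesis using K c by (intro ennreal_solve) auto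
qed

lemma strip_infinite:
  fixes \<phi> :: "real \<Rightarrow> real"
  assumes m[measurable]: "\<phi> \<in> borel_measurable borel" and nn: "\<And>t. 0 \<le> \<phi> t"
    and one: "(\<integral>\<^sup>+t. ennreal (\<phi> t) \<partial>lborel) = 1" and K: "K > 0" and ab: "\<alpha> \<noteq> 0 \<or> \<beta> \<noteq> 0"
  shows "(\<integral>\<^sup>+z. ennreal (\<phi> (c0 + \<alpha> * Re z + \<beta> * Im z) * K) \<partial>lborel) = \<infinity>"
proof -
  let ?F = "\<lambda>p::real\<times>real. Complex (fst p) (snd p)"
  let ?g = "\<lambda>p::real\<times>real. ennreal (\<phi> (c0 + \<alpha> * fst p + \<beta> * snd p) * K)"
  have gm: "?g \<in> borel_measurable (lborel \<Otimes>\<^sub>M lborel)"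
  proof -
    have "?g \<in> borel_measurable (borel \<Otimes>\<^sub>M borel)" by measurable
    moreover have "sets (lborel \<Otimes>\<^sub>M lborel) = sets ((borel::real measure) \<Otimes>\<^sub>M (borel::real measure))"
      by (rule sets_pair_measure_cong) simp_all
    ultimately show ?thesis using measurable_cong_sets[OF _ refl] by blast
  qed
  have fm: "(\<lambda>z. ennreal (\<phi> (c0 + \<alpha> * Re z + \<beta> * Im z) * K)) \<in> borel_measurable borel"
    by measurable
  have "(\<integral>\<^sup>+z. ennreal (\<phi> (c0 + \<alpha> * Re z + \<beta> * Im z) * K) \<partial>lborel)
      = (\<integral>\<^sup>+z. ennreal (\<phi> (c0 + \<alpha> * Re z + \<beta> * Im z) * K) \<partial>(distr (lborel :: (real \<times> real) measure) borel ?F))"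
    by (simp add: lborel_complex)
  also have "\<dots> = (\<integral>\<^sup>+p. ?g p \<partial>(lborel :: (real \<times> real) measure))"
    by (subst nn_integral_distr[OF Complex_meas]) (use fm in simp_all)
  also have "\<dots> = (\<integral>\<^sup>+p. ?g p \<partial>(lborel \<Otimes>\<^sub>M lborel))"
    by (simp add: lborel_prod)
  also have "\<dots> = \<infinity>"
  proof (cases "\<beta> \<noteq> 0")
    case True
    have "(\<integral>\<^sup>+p. ?g p \<partial>(lborel \<Otimes>\<^sub>M lborel)) = (\<integral>\<^sup>+x. (\<integral>\<^sup>+y. ?g (x, y) \<partial>lborel) \<partial>lborel)"
      by (rule lborel.nn_integral_fst[OF gm, symmetric])
    also have "\<dots> = (\<integral>\<^sup>+x. ennreal (K / \<bar>\<beta>\<bar>) \<partial>(lborel::real measure))"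
    proof -
      have i: "(\<integral>\<^sup>+y. ?g (x, y) \<partial>lborel) = ennreal (K / \<bar>\<beta>\<bar>)" for x
        using inner_affine[OF m nn one K True, of "c0 + \<alpha> * x"] by simp
      show ?thesis by (simp only: i)
    qed
    also have "\<dots> = \<infinity>" using K True by (simp add: ennreal_mult_top)
    finally show ?thesis .
  next
    case False
    then have a: "\<alpha> \<noteq> 0" using ab by simp
    have "(\<integral>\<^sup>+p. ?g p \<partial>(lborel \<Otimes>\<^sub>M lborel)) = (\<integral>\<^sup>+y. (\<integral>\<^sup>+x. ?g (x, y) \<partial>lborel) \<partial>lborel)"
      by (rule lborel_pair.nn_integral_snd[OF gm, symmetric])
    also have "\<dots> = (\<integral>\<^sup>+y. ennreal (K / \<bar>\<alpha>\<bar>) \<partial>(lborel::real measure))"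
    proof -
      have i: "(\<integral>\<^sup>+x. ?g (x, y) \<partial>lborel) = ennreal (K / \<bar>\<alpha>\<bar>)" for y
      proof -
        have e: "\<And>x. c0 + \<alpha> * x + \<beta> * y = (c0 + \<beta> * y) + \<alpha> * x" by simp
        show ?thesis
          unfolding fst_conv snd_conv e using inner_affine[OF m nn one K a, of "c0 + \<beta> * y"] by simp
      qed
      show ?thesis by (simp only: i)
    qed
    also have "\<dots> = \<infinity>" using K a by (simp add: ennreal_mult_top)
    finally show ?thesis .
  qed
  finally show ?thesis .
qed



lemma pointwise:
  fixes Lam R :: "'a::euclidean_space \<Rightarrow> 'a" and J :: "'a \<Rightarrow> real \<Rightarrow> 'a \<times> real \<Rightarrow> 'a \<times> real"
  assumes linJ: "linear (J q \<theta>)" and linDL: "linear (frechet_derivative Lam (at q))"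
    and T: "wx \<in> tangent_space Q q" "wy \<in> tangent_space Q q" "0 \<in> tangent_space Q q"
    and JJ: "\<forall>X \<in> tangent_space Q q \<times> UNIV. J q \<theta> X \<in> tangent_space Q q \<times> UNIV \<and> J q \<theta> (J q \<theta> X) = - X"
    and pos: "\<forall>v\<in>xi Q Lam q. v \<noteq> 0 \<longrightarrow> dlam Lam q v (fst (J q \<theta> (v, 0))) > 0"
    and J01: "J q \<theta> (0, 1) = (R q, 0)"
    and LR: "Lam q \<bullet> R q = 1" and dR: "\<forall>v\<in>tangent_space Q q. dlam Lam q (R q) v = 0"
    and i1: "proj_xi Lam R q wx + fst (J q \<theta> (proj_xi Lam R q wy, 0)) = 0"
    and i2: "proj_xi Lam R q wy + fst (J q \<theta> (proj_xi Lam R q (- wx), 0)) = 0"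
  shows "gnorm2 Lam R J q \<theta> (proj_xi Lam R q wx) + gnorm2 Lam R J q \<theta> (proj_xi Lam R q wy) = 2 * dlam Lam q wx wy"
    and "0 \<le> gnorm2 Lam R J q \<theta> (proj_xi Lam R q wx) + gnorm2 Lam R J q \<theta> (proj_xi Lam R q wy)"
    and "gnorm2 Lam R J q \<theta> (proj_xi Lam R q wx) + gnorm2 Lam R J q \<theta> (proj_xi Lam R q wy) = 0 \<Longrightarrow>
           proj_xi Lam R q wx = 0 \<and> proj_xi Lam R q wy = 0"
    and "(Lam q \<bullet> wx)^2 + (Lam q \<bullet> wy)^2 \<le> gnorm2 Lam R J q \<theta> wx + gnorm2 Lam R J q \<theta> wy"
proof -
  define DL where "DL = frechet_derivative Lam (at q)"
  have linDL': "linear DL" using linDL by (simp add: DL_def)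
  have dl: "dlam Lam q a b = DL a \<bullet> b - DL b \<bullet> a" for a b by (simp add: dlam_def DL_def)
  define p where "p = proj_xi Lam R q"
  have pdef: "p v = v - (Lam q \<bullet> v) *\<^sub>R R q" for v by (simp add: p_def proj_xi_def)
  have Lp: "Lam q \<bullet> p v = 0" for v using LR by (simp add: pdef inner_diff_right)
  have pp: "p (p v) = p v" for v using Lp[of v] by (simp add: pdef[of "p v"])
  have pneg: "p (- v) = - p v" for v by (simp add: pdef)
  define u1 where "u1 = p wx"
  define u2 where "u2 = p wy"
  have Jneg: "J q \<theta> (- X) = - J q \<theta> X" for X using linJ by (simp add: linear_neg)
  have fJneg: "fst (J q \<theta> (- a, 0)) = - fst (J q \<theta> (a, 0))" for a
    using Jneg[of "(a, 0)"] by simp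
  have u2eq: "u2 = fst (J q \<theta> (u1, 0))"
  proof -
    have "u2 + fst (J q \<theta> (- u1, 0)) = 0" using i2 unfolding u1_def u2_def p_def[symmetric] pneg .
    then have "u2 - fst (J q \<theta> (u1, 0)) = 0" unfolding fJneg by simp
    then show ?thesis by simp
  qed
  have u1eq: "- u1 = fst (J q \<theta> (u2, 0))"
    using i1 unfolding u1_def u2_def p_def[symmetric] by (simp only: neg_eq_iff_add_eq_0)
  have JR: "J q \<theta> (R q, 0) = - (0, 1)"
  proof -
    have "(0, 1) \<in> tangent_space Q q \<times> UNIV" using T(3) by simp
    then have "J q \<theta> (J q \<theta> (0, 1)) = - (0, 1)" using JJ by blast
    then show ?thesis using J01 by simp
  qed
  have fJp: "fst (J q \<theta> (p v, 0)) = fst (J q \<theta> (v, 0))" for v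
  proof -
    have eqv: "(p v, 0) = (v, 0) - (Lam q \<bullet> v) *\<^sub>R (R q, 0)" by (simp add: pdef)
    have "J q \<theta> (p v, 0) = J q \<theta> ((v, 0) - (Lam q \<bullet> v) *\<^sub>R (R q, 0))" by (simp only: eqv)
    also have "\<dots> = J q \<theta> (v, 0) - (Lam q \<bullet> v) *\<^sub>R J q \<theta> (R q, 0)"
      by (simp only: linear_diff[OF linJ] linear_cmul[OF linJ])
    finally have "J q \<theta> (p v, 0) = J q \<theta> (v, 0) - (Lam q \<bullet> v) *\<^sub>R J q \<theta> (R q, 0)" .
    then show ?thesis using JR by simp
  qed
  have fJT: "fst (J q \<theta> (v, 0)) \<in> tangent_space Q q" if "v \<in> tangent_space Q q" for v
  proof -
    have "(v, 0) \<in> tangent_space Q q \<times> UNIV" using that by simp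
    then have "J q \<theta> (v, 0) \<in> tangent_space Q q \<times> UNIV" using JJ by blast
    then show ?thesis by (cases "J q \<theta> (v, 0)") auto
  qed
  have u2xi: "u2 \<in> xi Q Lam q"
    unfolding xi_def using u2eq fJp[of wx] fJT[OF T(1)] Lp[of wy] by (simp add: u1_def u2_def)
  have u1xi: "- u1 \<in> xi Q Lam q"
  proof -
    have m1: "- u1 = fst (J q \<theta> (wy, 0))" using u1eq fJp[of wy] by (simp add: u2_def)
    have "- u1 \<in> tangent_space Q q" unfolding m1 by (rule fJT[OF T(2)])
    moreover have "Lam q \<bullet> (- u1) = 0" using Lp[of wx] by (simp add: u1_def)
    ultimately show ?thesis by (simp only: xi_def mem_Collect_eq)
  qed
  have g1: "gnorm2 Lam R J q \<theta> u1 = dlam Lam q u1 (fst (J q \<theta> (u1, 0)))"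
    unfolding gnorm2_def p_def[symmetric] u1_def using pp Lp by simp
  have g2: "gnorm2 Lam R J q \<theta> u2 = dlam Lam q u2 (fst (J q \<theta> (u2, 0)))"
    unfolding gnorm2_def p_def[symmetric] u2_def using pp Lp by simp
  have dneg: "dlam Lam q (- a) (- b) = dlam Lam q a b" for a b
    using linDL' by (simp add: dl linear_neg)
  have d0: "dlam Lam q 0 b = 0" for b
    using linDL' by (simp add: dl linear_0)
  have g1pos: "gnorm2 Lam R J q \<theta> u1 \<ge> 0 \<and> (gnorm2 Lam R J q \<theta> u1 = 0 \<longrightarrow> u1 = 0)"
  proof -
    have "gnorm2 Lam R J q \<theta> u1 = dlam Lam q (- u1) (fst (J q \<theta> (- u1, 0)))"
      unfolding g1 fJneg dneg ..
    moreover have "- u1 \<noteq> 0 \<longrightarrow> dlam Lam q (- u1) (fst (J q \<theta> (- u1, 0))) > 0"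
      using pos u1xi by blast
    ultimately show ?thesis using d0 by (cases "u1 = 0") auto
  qed
  have g2pos: "gnorm2 Lam R J q \<theta> u2 \<ge> 0 \<and> (gnorm2 Lam R J q \<theta> u2 = 0 \<longrightarrow> u2 = 0)"
  proof -
    have "u2 \<noteq> 0 \<longrightarrow> dlam Lam q u2 (fst (J q \<theta> (u2, 0))) > 0"
      using pos u2xi by blast
    then show ?thesis using d0 g2 by (cases "u2 = 0") auto
  qed
  have sum: "gnorm2 Lam R J q \<theta> u1 + gnorm2 Lam R J q \<theta> u2 = 2 * dlam Lam q u1 u2"
  proof -
    have "gnorm2 Lam R J q \<theta> u2 = dlam Lam q u2 (- u1)" using g2 u1eq by simp
    also have "\<dots> = dlam Lam q u1 u2" using linDL' by (simp add: dl linear_neg)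
    finally show ?thesis using g1 u2eq by simp
  qed
  have r1: "DL (R q) \<bullet> wx = DL wx \<bullet> R q" using dR T(1) by (simp add: dl)
  have r2: "DL (R q) \<bullet> wy = DL wy \<bullet> R q" using dR T(2) by (simp add: dl)
  have uw: "dlam Lam q u1 u2 = dlam Lam q wx wy"
  proof -
    define a where "a = Lam q \<bullet> wx"
    define b where "b = Lam q \<bullet> wy"
    have e1: "DL (wx - a *\<^sub>R R q) = DL wx - a *\<^sub>R DL (R q)"
      by (simp only: linear_diff[OF linDL'] linear_cmul[OF linDL'])
    have e2: "DL (wy - b *\<^sub>R R q) = DL wy - b *\<^sub>R DL (R q)"
      by (simp only: linear_diff[OF linDL'] linear_cmul[OF linDL'])
    have "dlam Lam q u1 u2 = (DL wx - a *\<^sub>R DL (R q)) \<bullet> (wy - b *\<^sub>R R q) - (DL wy - b *\<^sub>R DL (R q)) \<bullet> (wx - a *\<^sub>R R q)"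
      unfolding u1_def u2_def pdef dl a_def[symmetric] b_def[symmetric] e1 e2 ..
    also have "\<dots> = DL wx \<bullet> wy - DL wy \<bullet> wx"
      by (simp add: inner_diff_left inner_diff_right r1 r2 algebra_simps)
    finally show ?thesis by (simp add: dl)
  qed
  show "gnorm2 Lam R J q \<theta> (proj_xi Lam R q wx) + gnorm2 Lam R J q \<theta> (proj_xi Lam R q wy) = 2 * dlam Lam q wx wy"
    using sum uw by (simp add: u1_def u2_def p_def)
  show "0 \<le> gnorm2 Lam R J q \<theta> (proj_xi Lam R q wx) + gnorm2 Lam R J q \<theta> (proj_xi Lam R q wy)"
    using g1pos g2pos by (simp add: u1_def u2_def p_def)
  show "gnorm2 Lam R J q \<theta> (proj_xi Lam R q wx) + gnorm2 Lam R J q \<theta> (proj_xi Lam R q wy) = 0 \<Longrightarrow>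
           proj_xi Lam R q wx = 0 \<and> proj_xi Lam R q wy = 0"
    using g1pos g2pos by (simp add: u1_def u2_def p_def)
  have "gnorm2 Lam R J q \<theta> wx = gnorm2 Lam R J q \<theta> u1 + (Lam q \<bullet> wx)^2"
    unfolding gnorm2_def p_def[symmetric] u1_def using pp Lp by simp
  moreover have "gnorm2 Lam R J q \<theta> wy = gnorm2 Lam R J q \<theta> u2 + (Lam q \<bullet> wy)^2"
    unfolding gnorm2_def p_def[symmetric] u2_def using pp Lp by simp
  ultimately show "(Lam q \<bullet> wx)^2 + (Lam q \<bullet> wy)^2 \<le> gnorm2 Lam R J q \<theta> wx + gnorm2 Lam R J q \<theta> wy"
    using g1pos g2pos by simp
qed





lemma iter_dd_inner:
  fixes G :: "'b::euclidean_space \<Rightarrow> 'c::real_inner"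
  assumes d: "\<forall>vs x. iter_dd vs G differentiable (at x)"
  shows "iter_dd vs (\<lambda>z. c \<bullet> G z) = (\<lambda>z. c \<bullet> iter_dd vs G z)"
proof (induction vs)
  case Nil then show ?case by simp
next
  case (Cons v vs)
  have "frechet_derivative (\<lambda>z. c \<bullet> iter_dd vs G z) (at x) = (\<lambda>h. c \<bullet> frechet_derivative (iter_dd vs G) (at x) h)" for x
  proof -
    have "(iter_dd vs G has_derivative frechet_derivative (iter_dd vs G) (at x)) (at x)"
      using d frechet_derivative_works by blast
    then show ?thesis by (rule fd_eq[OF has_derivative_inner_right])
  qed
  then show ?case by (simp only: iter_dd.simps Cons.IH)
qed

lemma iter_dd_inner_diff:
  fixes G :: "'b::euclidean_space \<Rightarrow> 'c::real_inner"
  assumes d: "\<forall>vs x. iter_dd vs G differentiable (at x)"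
  shows "\<forall>vs x. iter_dd vs (\<lambda>z. c \<bullet> G z) differentiable (at x)"
proof (intro allI)
  fix vs x
  have "(iter_dd vs G has_derivative frechet_derivative (iter_dd vs G) (at x)) (at x)"
    using d frechet_derivative_works by blast
  then have "(\<lambda>z. c \<bullet> iter_dd vs G z) differentiable (at x)"
    using has_derivative_inner_right differentiableI by blast
  then show "iter_dd vs (\<lambda>z. c \<bullet> G z) differentiable (at x)" by (simp add: iter_dd_inner[OF d])
qed

lemma schwarz_vec:
  fixes G :: "'b::euclidean_space \<Rightarrow> 'c::euclidean_space"
  assumes d: "\<forall>vs x. iter_dd vs G differentiable (at x)" and n1: "norm v1 = 1" and n2: "norm v2 = 1"
  shows "iter_dd [v2, v1] G z = iter_dd [v1, v2] G z"
proof -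
  define c where "c = iter_dd [v2, v1] G z - iter_dd [v1, v2] G z"
  have "iter_dd [v2, v1] (\<lambda>z. c \<bullet> G z) z = iter_dd [v1, v2] (\<lambda>z. c \<bullet> G z) z"
    by (rule schwarz[OF iter_dd_inner_diff[OF d] n1 n2])
  then have "c \<bullet> iter_dd [v2, v1] G z = c \<bullet> iter_dd [v1, v2] G z"
    by (simp only: iter_dd_inner[OF d])
  then have "c \<bullet> c = 0" by (simp add: c_def inner_diff_right)
  then show ?thesis by (simp add: c_def)
qed

lemma lin_decomp:
  fixes L :: "complex \<Rightarrow> real"
  assumes "linear L"
  shows "L h = Re h * L 1 + Im h * L \<i>"
proof -
  have "h = Re h *\<^sub>R 1 + Im h *\<^sub>R \<i>" by (simp add: complex_eq_iff)
  then have "L h = L (Re h *\<^sub>R 1 + Im h *\<^sub>R \<i>)" by simp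
  also have "\<dots> = Re h * L 1 + Im h * L \<i>"
    by (simp add: linear_add[OF assms] linear_cmul[OF assms])
  finally show ?thesis .
qed

theorem mainTheorem5:
  fixes Q :: "'a::euclidean_space set" and Lam R :: "'a \<Rightarrow> 'a"
    and J :: "'a \<Rightarrow> real \<Rightarrow> 'a \<times> real \<Rightarrow> 'a \<times> real"
    and w :: "complex \<Rightarrow> 'a" and f :: "complex \<Rightarrow> complex" and ft :: "complex \<Rightarrow> real"
  assumes "contact_manifold Q Lam"
    and "reeb_field Q Lam R"
    and "lam_admissible Q Lam R J"
    and "\<forall>z. f z = cis (2 * pi * ft z)"
    and "lcs_instanton Q Lam R J w ft"
    and "\<exists>C. \<forall>z. dw_norm2 Lam R J w ft z \<le> C"
    and "E_pi Lam R J w ft = 0"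
    and "E_perp Lam w ft < \<infinity>"
  shows "\<exists>q c. \<forall>z. w z = q \<and> f z = c"
proof -
  obtain W0 where W0: "open W0" "Q \<subseteq> W0" "cinf_on W0 Lam"
    using assms(1) unfolding contact_manifold_def by blast
  obtain W1 where W1: "Q \<subseteq> W1" "\<forall>x\<in>W1. \<forall>\<theta>. linear (J x \<theta>)"
    using assms(3) unfolding lam_admissible_def by blast
  have adm: "(\<forall>X \<in> tangent_space Q q \<times> UNIV. J q \<theta> X \<in> tangent_space Q q \<times> UNIV \<and> J q \<theta> (J q \<theta> X) = - X) \<and>
      (\<forall>v\<in>xi Q Lam q. v \<noteq> 0 \<longrightarrow> dlam Lam q v (fst (J q \<theta> (v, 0))) > 0) \<and> J q \<theta> (0, 1) = (R q, 0)"
    if "q \<in> Q" for q \<theta>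
    using assms(3) that unfolding lam_admissible_def by blast
  have reeb: "Lam q \<bullet> R q = 1 \<and> (\<forall>v\<in>tangent_space Q q. dlam Lam q (R q) v = 0)" if "q \<in> Q" for q
    using assms(2) that unfolding reeb_field_def by blast
  have inst: "cinf_on UNIV w" "\<forall>z. w z \<in> Q" "cinf_on UNIV ft"
    using assms(5) unfolding lcs_instanton_def by blast+
  have eq1: "\<And>z v. proj_xi Lam R (w z) (frechet_derivative w (at z) v)
            + fst (J (w z) (ft z) (proj_xi Lam R (w z) (frechet_derivative w (at z) (\<i> * v)), 0)) = 0"
    using assms(5) unfolding lcs_instanton_def by blast
  have eq2: "\<And>z v. Lam (w z) \<bullet> frechet_derivative w (at z) (\<i> * v) = frechet_derivative ft (at z) v"
    using assms(5) unfolding lcs_instanton_def by blast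
  have dw: "\<forall>vs x. iter_dd vs w differentiable (at x)" using inst(1) unfolding cinf_on_def by blast
  have dft: "\<forall>vs x. iter_dd vs ft differentiable (at x)" using inst(3) unfolding cinf_on_def by blast
  have wder: "(w has_derivative frechet_derivative w (at z)) (at z)" for z
    using dw[rule_format, of "[]" z] frechet_derivative_works[THEN iffD1] by simp
  have ftder: "(ft has_derivative frechet_derivative ft (at z)) (at z)" for z
    using dft[rule_format, of "[]" z] frechet_derivative_works[THEN iffD1] by simp
  have linDw: "linear (frechet_derivative w (at z))" for z using wder has_derivative_linear by blast
  have linDft: "linear (frechet_derivative ft (at z))" for z using ftder has_derivative_linear by blast
  have Lamder: "(Lam has_derivative frechet_derivative Lam (at q)) (at q)" if "q \<in> Q" for q
  proof -
    have "Lam differentiable (at q)" using W0 that unfolding cinf_on_def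
      by (metis iter_dd.simps(1) subsetD)
    then show ?thesis using frechet_derivative_works[THEN iffD1] by blast
  qed
  have linDL: "linear (frechet_derivative Lam (at q))" if "q \<in> Q" for q
    using Lamder[OF that] has_derivative_linear by blast
  have linJ: "linear (J q \<theta>)" if "q \<in> Q" for q \<theta> using W1 that by blast
  have T: "frechet_derivative w (at z) v \<in> tangent_space Q (w z)" for z v
    by (rule tangent_dw[OF dw inst(2)])
  have PW: "pi_dw_norm2 Lam R J w ft z = 2 * dlam Lam (w z) (frechet_derivative w (at z) 1) (frechet_derivative w (at z) \<i>)
      \<and> 0 \<le> pi_dw_norm2 Lam R J w ft z
      \<and> (pi_dw_norm2 Lam R J w ft z = 0 \<longrightarrow> proj_xi Lam R (w z) (frechet_derivative w (at z) 1) = 0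
             \<and> proj_xi Lam R (w z) (frechet_derivative w (at z) \<i>) = 0)
      \<and> (Lam (w z) \<bullet> frechet_derivative w (at z) 1)^2 + (Lam (w z) \<bullet> frechet_derivative w (at z) \<i>)^2 \<le> dw_norm2 Lam R J w ft z" for z
  proof -
    have q: "w z \<in> Q" using inst(2) by blast
    have T0: "0 \<in> tangent_space Q (w z)" using T[of z 0] linear_0[OF linDw[of z]] by simp
    have i1: "proj_xi Lam R (w z) (frechet_derivative w (at z) 1) + fst (J (w z) (ft z) (proj_xi Lam R (w z) (frechet_derivative w (at z) \<i>), 0)) = 0"
      using eq1[of z 1] by simp
    have i2: "proj_xi Lam R (w z) (frechet_derivative w (at z) \<i>) + fst (J (w z) (ft z) (proj_xi Lam R (w z) (- frechet_derivative w (at z) 1), 0)) = 0"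
      using eq1[of z \<i>] linear_neg[OF linDw[of z], of 1] by simp
    have h: "linear (J (w z) (ft z))" "linear (frechet_derivative Lam (at (w z)))"
      "\<forall>X \<in> tangent_space Q (w z) \<times> UNIV. J (w z) (ft z) X \<in> tangent_space Q (w z) \<times> UNIV \<and> J (w z) (ft z) (J (w z) (ft z) X) = - X"
      "\<forall>v\<in>xi Q Lam (w z). v \<noteq> 0 \<longrightarrow> dlam Lam (w z) v (fst (J (w z) (ft z) (v, 0))) > 0"
      "J (w z) (ft z) (0, 1) = (R (w z), 0)"
      "Lam (w z) \<bullet> R (w z) = 1" "\<forall>v\<in>tangent_space Q (w z). dlam Lam (w z) (R (w z)) v = 0"
      using linJ[OF q] linDL[OF q] adm[OF q, of "ft z"] reeb[OF q] by blast+
    note P1 = pointwise(1)[where q="w z" and \<theta>="ft z" and J=J and Lam=Lam and R=R and Q=Q and wx="frechet_derivative w (at z) 1" and wy="frechet_derivative w (at z) \<i>", OF h(1,2) T[of z 1] T[of z \<i>] T0 h(3-7) i1 i2]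
    note P2 = pointwise(2)[where q="w z" and \<theta>="ft z" and J=J and Lam=Lam and R=R and Q=Q and wx="frechet_derivative w (at z) 1" and wy="frechet_derivative w (at z) \<i>", OF h(1,2) T[of z 1] T[of z \<i>] T0 h(3-7) i1 i2]
    note P3 = pointwise(3)[where q="w z" and \<theta>="ft z" and J=J and Lam=Lam and R=R and Q=Q and wx="frechet_derivative w (at z) 1" and wy="frechet_derivative w (at z) \<i>", OF h(1,2) T[of z 1] T[of z \<i>] T0 h(3-7) i1 i2]
    note P4 = pointwise(4)[where q="w z" and \<theta>="ft z" and J=J and Lam=Lam and R=R and Q=Q and wx="frechet_derivative w (at z) 1" and wy="frechet_derivative w (at z) \<i>", OF h(1,2) T[of z 1] T[of z \<i>] T0 h(3-7) i1 i2]
    note P = P1 P2 P3 P4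
    show ?thesis using P unfolding pi_dw_norm2_def dw_norm2_def by blast
  qed

  have hA: "frechet_derivative ft (at z) 1 = Lam (w z) \<bullet> frechet_derivative w (at z) \<i>" for z
    using eq2[of z 1] by simp
  have hB: "frechet_derivative ft (at z) \<i> = - (Lam (w z) \<bullet> frechet_derivative w (at z) 1)" for z
    using eq2[of z \<i>] linear_neg[OF linDw[of z], of 1] by simp
  have Afun: "iter_dd [1] ft = (\<lambda>z. Lam (w z) \<bullet> iter_dd [\<i>] w z)" by (simp add: fun_eq_iff hA)
  have Bfun: "iter_dd [\<i>] ft = (\<lambda>z. - (Lam (w z) \<bullet> iter_dd [1] w z))" by (simp add: fun_eq_iff hB)
  have prodD: "((\<lambda>z. Lam (w z) \<bullet> H z) has_derivative (\<lambda>h. Lam (w z) \<bullet> frechet_derivative H (at z) h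
      + frechet_derivative Lam (at (w z)) (frechet_derivative w (at z) h) \<bullet> H z)) (at z)"
    if "\<And>x. H differentiable (at x)" for H :: "complex \<Rightarrow> 'a" and z
  proof -
    have "(H has_derivative frechet_derivative H (at z)) (at z)"
      using that frechet_derivative_works[THEN iffD1] by blast
    moreover have "((\<lambda>z. Lam (w z)) has_derivative (\<lambda>h. frechet_derivative Lam (at (w z)) (frechet_derivative w (at z) h))) (at z)"
      by (rule has_derivative_compose[OF wder Lamder]) (use inst(2) in blast)
    ultimately show ?thesis by (rule has_derivative_inner[rotated])
  qed
  have dwv: "\<And>x. iter_dd [v] w differentiable (at x)" for v using dw by blast
  have FA: "iter_dd [a, 1] ft z = Lam (w z) \<bullet> iter_dd [a, \<i>] w z
      + frechet_derivative Lam (at (w z)) (frechet_derivative w (at z) a) \<bullet> frechet_derivative w (at z) \<i>" for a z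
  proof -
    have "iter_dd [a, 1] ft z = frechet_derivative (iter_dd [1] ft) (at z) a" by simp
    also have "\<dots> = frechet_derivative (\<lambda>z. Lam (w z) \<bullet> iter_dd [\<i>] w z) (at z) a" unfolding Afun ..
    also have "\<dots> = Lam (w z) \<bullet> frechet_derivative (iter_dd [\<i>] w) (at z) a
      + frechet_derivative Lam (at (w z)) (frechet_derivative w (at z) a) \<bullet> iter_dd [\<i>] w z"
      by (simp only: fd_eq[OF prodD[OF dwv]])
    finally show ?thesis by simp
  qed
  have FB: "iter_dd [a, \<i>] ft z = - (Lam (w z) \<bullet> iter_dd [a, 1] w z
      + frechet_derivative Lam (at (w z)) (frechet_derivative w (at z) a) \<bullet> frechet_derivative w (at z) 1)" for a z
  proof -
    have "iter_dd [a, \<i>] ft z = frechet_derivative (iter_dd [\<i>] ft) (at z) a" by simp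
    also have "\<dots> = frechet_derivative (\<lambda>z. - (Lam (w z) \<bullet> iter_dd [1] w z)) (at z) a" unfolding Bfun ..
    also have "\<dots> = - (Lam (w z) \<bullet> frechet_derivative (iter_dd [1] w) (at z) a
      + frechet_derivative Lam (at (w z)) (frechet_derivative w (at z) a) \<bullet> iter_dd [1] w z)"
      by (simp only: fd_eq[OF has_derivative_minus[OF prodD[OF dwv]]])
    finally show ?thesis by simp
  qed
  define Lap where "Lap z = iter_dd [1, 1] ft z + iter_dd [\<i>, \<i>] ft z" for z
  have Lap_eq: "Lap z = dlam Lam (w z) (frechet_derivative w (at z) 1) (frechet_derivative w (at z) \<i>)" for z
  proof -
    have "iter_dd [\<i>, 1] w z = iter_dd [1, \<i>] w z" by (rule schwarz_vec[OF dw]) simp_all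
    then show ?thesis unfolding Lap_def FA FB dlam_def by simp
  qed
  have Lap_cont: "continuous_on UNIV Lap"
  proof -
    have "isCont Lap z" for z
      unfolding Lap_def using dft by (intro continuous_intros differentiable_imp_continuous_within) blast+
    then show ?thesis by (simp add: continuous_at_imp_continuous_on)
  qed
  have Lap_pi: "pi_dw_norm2 Lam R J w ft z / 2 = Lap z" for z using PW[of z] Lap_eq[of z] by simp
  have Lap_nn: "0 \<le> Lap z" for z using PW[of z] Lap_pi[of z] by simp
  have Lap0: "Lap z = 0" for z
  proof -
    have Lm[measurable]: "Lap \<in> borel_measurable borel" by (rule borel_measurable_continuous_onI[OF Lap_cont])
    have "(\<integral>\<^sup>+ z. ennreal (Lap z) \<partial>lborel) = 0"
      using assms(7) unfolding E_pi_def Lap_pi .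
    then have "AE z in lborel. ennreal (Lap z) = 0"
      by (subst (asm) nn_integral_0_iff_AE) measurable
    then have "AE z in lborel. z \<in> {z. Lap z = 0}"
      by eventually_elim (metis Lap_nn ennreal_eq_0_iff order_antisym mem_Collect_eq)
    then have "AE z in lebesgue. z \<in> {z. Lap z = 0}" by (rule AE_completion)
    moreover have "closed {z. Lap z = 0}"
      using continuous_closed_preimage_constant[OF Lap_cont closed_UNIV, of 0] by simp
    ultimately show ?thesis using mem_closed_if_AE_lebesgue by blast
  qed
  have proj0: "proj_xi Lam R (w z) (frechet_derivative w (at z) 1) = 0 \<and> proj_xi Lam R (w z) (frechet_derivative w (at z) \<i>) = 0" for z
    using PW[of z] Lap_pi[of z] Lap0[of z] by simp

  define A where "A = iter_dd [1] ft"
  define B where "B = iter_dd [\<i>] ft"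
  define DA where "DA z = frechet_derivative A (at z)" for z
  define DB where "DB z = frechet_derivative B (at z)" for z
  have Ader: "(A has_derivative DA z) (at z)" for z
    unfolding A_def DA_def using dft frechet_derivative_works[THEN iffD1] by blast
  have Bder: "(B has_derivative DB z) (at z)" for z
    unfolding B_def DB_def using dft frechet_derivative_works[THEN iffD1] by blast
  have linDA: "linear (DA z)" for z using Ader has_derivative_linear by blast
  have linDB: "linear (DB z)" for z using Bder has_derivative_linear by blast
  have sch: "DA z \<i> = DB z 1" for z
  proof -
    have "iter_dd [\<i>, 1] ft z = iter_dd [1, \<i>] ft z" by (rule schwarz[OF dft]) simp_all
    then show ?thesis by (simp add: DA_def DB_def A_def B_def)
  qed
  have harm: "DA z 1 + DB z \<i> = 0" for z
    using Lap0[of z] by (simp add: Lap_def DA_def DB_def A_def B_def)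
  define G where "G z = Complex (A z) (- B z)" for z
  have Gder: "(G has_field_derivative Complex (DA z 1) (- DB z 1)) (at z)" for z
  proof -
    have G': "G = (\<lambda>z. of_real (A z) + \<i> * of_real (- B z))" by (simp add: fun_eq_iff G_def Complex_eq)
    have "(G has_derivative (\<lambda>h. of_real (DA z h) + \<i> * of_real (- DB z h))) (at z)"
      unfolding G' by (intro derivative_intros Ader Bder)
    then show ?thesis
    proof (rule has_derivative_imp_has_field_derivative)
      fix h :: complex
      show "h * Complex (DA z 1) (- DB z 1) = of_real (DA z h) + \<i> * of_real (- DB z h)"
        unfolding lin_decomp[OF linDA[of z], of h] lin_decomp[OF linDB[of z], of h] sch
        using harm[of z] by (simp add: complex_eq_iff algebra_simps eq_neg_iff_add_eq_0[symmetric])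
    qed
  qed
  have Ghol: "G holomorphic_on UNIV"
    unfolding holomorphic_on_def field_differentiable_def using Gder by blast
  obtain C where C: "\<And>z. dw_norm2 Lam R J w ft z \<le> C" using assms(6) by blast
  have Gbd: "bounded (range G)"
  proof -
    have "norm (G z) \<le> sqrt C" for z
    proof -
      have "(norm (G z))^2 = (A z)^2 + (B z)^2" by (simp add: G_def cmod_power2)
      also have "\<dots> = (Lam (w z) \<bullet> frechet_derivative w (at z) 1)^2 + (Lam (w z) \<bullet> frechet_derivative w (at z) \<i>)^2"
        by (simp add: A_def B_def hA hB)
      also have "\<dots> \<le> C" using PW[of z] C[of z] by linarith
      finally show ?thesis by (rule real_le_rsqrt)
    qed
    then show ?thesis unfolding bounded_iff by blast
  qed
  obtain c where c: "\<And>z. G z = c"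
    using Liouville_theorem[OF Ghol Gbd] unfolding constant_on_def by blast
  define \<alpha> where "\<alpha> = Re c"
  define \<beta> where "\<beta> = - Im c"
  have Ac: "A z = \<alpha>" for z using c[of z] by (simp add: G_def \<alpha>_def complex_eq_iff)
  have Bc: "B z = \<beta>" for z using c[of z] by (simp add: G_def \<beta>_def complex_eq_iff)

  have Dft_eq: "frechet_derivative ft (at z) v = \<alpha> * Re v + \<beta> * Im v" for z v
    using lin_decomp[OF linDft[of z], of v] Ac[of z] Bc[of z] by (simp add: A_def B_def)
  obtain c1 where c1: "\<And>z. ft z - (\<alpha> * Re z + \<beta> * Im z) = c1"
  proof -
    have "((\<lambda>z. ft z - (\<alpha> * Re z + \<beta> * Im z)) has_derivative (\<lambda>h. 0)) (at z within UNIV)" for z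
    proof -
      have "((\<lambda>z. ft z - (\<alpha> * Re z + \<beta> * Im z)) has_derivative
              (\<lambda>h. frechet_derivative ft (at z) h - (\<alpha> * Re h + \<beta> * Im h))) (at z)"
        by (intro derivative_intros ftder)
      then show ?thesis by (simp add: Dft_eq)
    qed
    then obtain c1 where "\<forall>x\<in>UNIV. ft x - (\<alpha> * Re x + \<beta> * Im x) = c1"
      using has_derivative_zero_constant[OF convex_UNIV] by blast
    then show ?thesis using that by blast
  qed
  have ftc: "ft z = c1 + \<alpha> * Re z + \<beta> * Im z" for z using c1[of z] by simp
  have vd: "vert_density Lam w ft z = \<alpha>^2 + \<beta>^2" for z
  proof -
    have "Lam (w z) \<bullet> frechet_derivative w (at z) \<i> = \<alpha>" using hA[of z] Dft_eq[of z 1] by simp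
    moreover have "Lam (w z) \<bullet> frechet_derivative w (at z) 1 = - \<beta>" using hB[of z] Dft_eq[of z \<i>] by simp
    ultimately show ?thesis unfolding vert_density_def using Dft_eq[of z 1] Dft_eq[of z \<i>]
      by (simp add: power2_eq_square)
  qed
  have ab0: "\<alpha> = 0 \<and> \<beta> = 0"
  proof (rule ccontr)
    assume nab: "\<not> (\<alpha> = 0 \<and> \<beta> = 0)"
    then have K: "\<alpha>^2 + \<beta>^2 > 0" by (simp add: sum_power2_gt_zero_iff)
    obtain \<phi> where phi: "\<phi> \<in> test_fns" using test_fn_exists by blast
    then have pc: "cinf_on UNIV \<phi>" and pn: "\<And>t. 0 \<le> \<phi> t" and pi1: "(\<phi> has_integral 1) UNIV"
      unfolding test_fns_def by auto
    have pcont: "continuous_on UNIV \<phi>"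
    proof -
      have "\<phi> differentiable (at t)" for t using pc unfolding cinf_on_def by (metis iter_dd.simps(1) UNIV_I)
      then show ?thesis by (simp add: continuous_at_imp_continuous_on differentiable_imp_continuous_within)
    qed
    have pm: "\<phi> \<in> borel_measurable borel" by (rule borel_measurable_continuous_onI[OF pcont])
    have pone: "(\<integral>\<^sup>+t. ennreal (\<phi> t) \<partial>lborel) = 1"
      using nn_integral_has_integral_lebesgue'[OF _ pi1] pn by simp
    have "(\<integral>\<^sup>+z. ennreal (\<phi> (ft z) * vert_density Lam w ft z) \<partial>lborel)
        = (\<integral>\<^sup>+z. ennreal (\<phi> (c1 + \<alpha> * Re z + \<beta> * Im z) * (\<alpha>^2 + \<beta>^2)) \<partial>lborel)"
      by (simp add: ftc vd)
    also have "\<dots> = \<infinity>" by (rule strip_infinite[OF pm pn pone K]) (use nab in auto)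
    finally have "(\<integral>\<^sup>+z. ennreal (\<phi> (ft z) * vert_density Lam w ft z) \<partial>lborel) = \<infinity>" .
    moreover have "(\<integral>\<^sup>+z. ennreal (\<phi> (ft z) * vert_density Lam w ft z) \<partial>lborel) \<le> E_perp Lam w ft"
      unfolding E_perp_def by (rule SUP_upper[OF phi])
    ultimately show False using assms(8) by (simp add: top_unique)
  qed
  have wx0: "frechet_derivative w (at z) 1 = 0" and wy0: "frechet_derivative w (at z) \<i> = 0" for z
  proof -
    have dec: "v = proj_xi Lam R (w z) v + (Lam (w z) \<bullet> v) *\<^sub>R R (w z)" for v by (simp add: proj_xi_def)
    have "Lam (w z) \<bullet> frechet_derivative w (at z) \<i> = 0" using hA[of z] Dft_eq[of z 1] ab0 by simp
    moreover have "Lam (w z) \<bullet> frechet_derivative w (at z) 1 = 0" using hB[of z] Dft_eq[of z \<i>] ab0 by simp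
    ultimately show "frechet_derivative w (at z) 1 = 0" "frechet_derivative w (at z) \<i> = 0"
      using dec[of "frechet_derivative w (at z) 1"] dec[of "frechet_derivative w (at z) \<i>"] proj0[of z] by simp_all
  qed
  have Dw0: "frechet_derivative w (at z) h = 0" for z h
  proof -
    have "h = Re h *\<^sub>R 1 + Im h *\<^sub>R \<i>" by (simp add: complex_eq_iff)
    then have "frechet_derivative w (at z) h = frechet_derivative w (at z) (Re h *\<^sub>R 1 + Im h *\<^sub>R \<i>)" by simp
    also have "\<dots> = 0" by (simp add: linear_add[OF linDw] linear_cmul[OF linDw] wx0 wy0)
    finally show ?thesis .
  qed
  obtain q where q: "\<forall>x\<in>UNIV. w x = q"
  proof -
    have "(w has_derivative (\<lambda>h. 0)) (at z within UNIV)" for z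
    proof -
      have "frechet_derivative w (at z) = (\<lambda>h. 0)" by (rule ext) (rule Dw0)
      then show ?thesis using wder[of z] by simp
    qed
    then show ?thesis using has_derivative_zero_constant[OF convex_UNIV] that by blast
  qed
  have "\<forall>z. w z = q \<and> f z = cis (2 * pi * c1)" using q assms(4) ftc ab0 by simp
  then show ?thesis by blast
qed



end
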